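(* Let $(G,P)$ be a quasi-lattice ordered group. Suppose there is a family $\{q_x:x\in G\}\subseteq\mathcal T(G,P)$ of mutually orthogonal projections such that (1) $q_y\in\mathcal D'$ and $T_pq_y=q_{py}T_p$ for all $y\in G$ and $p\in P$, and (2) $\sum_{y\in G}q_y=I$ in the weak operator topology of $B(\ell^2(P))$. Then $(G,P)$ has a FESSPE.
   Context: Quasi-lattice ordered group $(G,P)$: $G$ discrete, $P\subseteq G$ subsemigroup with $P\cap P^{-1}=\{e\}$, and for $x\le y\iff x^{-1}y\in P$ elements with a common upper bound in $P$ have a least one in $P$. $T_s\varepsilon_t=\varepsilon_{st}$ on $\ell^2(P)$ with standard basis $\{\varepsilon_t\}_{t\in P}$; $\mathcal T(G,P)\subseteq B(\ell^2(P))$ is generated by $\{T_s:s\in P\}$; $\mathcal D=\overline{\mathrm{span}}\{T_sT_s^*:s\in P\}$ and $\mathcal D'$ is its commutant in $B(\ell^2(P))$. A FESSPE of $(G,P)$ is a finite set $F\subseteq P\setminus\{e\}$ with $FP=P\setminus\{e\}$. *)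

theory Defs
  imports "HOL-Analysis.Analysis"
begin

text \<open>The discrete group G is modelled by a type of class group_add; the group
operation (written multiplicatively in the paper) is written +, the identity e is 0,
and the inverse of x is -x.  Nothing is assumed about commutativity.\<close>

type_synonym 'g vec = "'g \<Rightarrow> complex"
type_synonym 'g oper = "'g vec \<Rightarrow> 'g vec"

definition quasi_lattice_ordered :: "'g::group_add set \<Rightarrow> bool" where
  "quasi_lattice_ordered P \<longleftrightarrow>
     0 \<in> P \<and> (\<forall>x\<in>P. \<forall>y\<in>P. x + y \<in> P) \<and> P \<inter> uminus ` P = {0} \<and>
     (\<forall>x\<in>P. \<forall>y\<in>P. (\<exists>z\<in>P. -x + z \<in> P \<and> -y + z \<in> P) \<longrightarrow>
        (\<exists>z\<in>P. -x + z \<in> P \<and> -y + z \<in> P \<and>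
           (\<forall>w\<in>P. -x + w \<in> P \<and> -y + w \<in> P \<longrightarrow> -z + w \<in> P)))"

definition has_FESSPE :: "'g::group_add set \<Rightarrow> bool" where
  "has_FESSPE P \<longleftrightarrow> (\<exists>F. finite F \<and> F \<subseteq> P - {0} \<and>
      {f + p | f p. f \<in> F \<and> p \<in> P} = P - {0})"

text \<open>The Hilbert space l^2(P), realised as square summable functions on G vanishing off P.\<close>
definition l2 :: "'g set \<Rightarrow> 'g vec set" where
  "l2 P = {f. (\<forall>t. t \<notin> P \<longrightarrow> f t = 0) \<and> (\<lambda>t. (cmod (f t))^2) summable_on P}"

definition l2norm :: "'g set \<Rightarrow> 'g vec \<Rightarrow> real" where
  "l2norm P f = sqrt (infsum (\<lambda>t. (cmod (f t))^2) P)"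

definition l2inner :: "'g set \<Rightarrow> 'g vec \<Rightarrow> 'g vec \<Rightarrow> complex" where
  "l2inner P f g = infsum (\<lambda>t. f t * cnj (g t)) P"

definition eps :: "'g \<Rightarrow> 'g vec" where
  "eps s = (\<lambda>t. if t = s then 1 else 0)"

text \<open>Bounded operators on l^2(P); normalised to be 0 outside l^2(P) so that
equality of operators is plain function equality.\<close>
definition bdd_op :: "'g set \<Rightarrow> 'g oper \<Rightarrow> bool" where
  "bdd_op P A \<longleftrightarrow>
     (\<forall>f. f \<notin> l2 P \<longrightarrow> A f = (\<lambda>t. 0)) \<and>
     (\<forall>f\<in>l2 P. A f \<in> l2 P) \<and>
     (\<forall>f\<in>l2 P. \<forall>g\<in>l2 P. \<forall>a b. A (\<lambda>t. a * f t + b * g t) = (\<lambda>t. a * A f t + b * A g t)) \<and>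
     (\<exists>C. \<forall>f\<in>l2 P. l2norm P (A f) \<le> C * l2norm P f)"

definition opnorm :: "'g set \<Rightarrow> 'g oper \<Rightarrow> real" where
  "opnorm P A = Sup {l2norm P (A f) | f. f \<in> l2 P \<and> l2norm P f \<le> 1}"

definition adj :: "'g set \<Rightarrow> 'g oper \<Rightarrow> 'g oper" where
  "adj P A = (\<lambda>g. if g \<in> l2 P then
       (\<lambda>s. if s \<in> P then infsum (\<lambda>t. g t * cnj (A (eps s) t)) P else 0) else (\<lambda>t. 0))"

definition op_add :: "'g oper \<Rightarrow> 'g oper \<Rightarrow> 'g oper" where
  "op_add A B = (\<lambda>f t. A f t + B f t)"

definition op_diff :: "'g oper \<Rightarrow> 'g oper \<Rightarrow> 'g oper" where
  "op_diff A B = (\<lambda>f t. A f t - B f t)"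

definition op_scale :: "complex \<Rightarrow> 'g oper \<Rightarrow> 'g oper" where
  "op_scale c A = (\<lambda>f t. c * A f t)"

text \<open>The isometry T_s: T_s eps_t = eps_{st}, i.e. (T_s f)(u) = f(s^{-1}u) if s^{-1}u \<in> P.\<close>
definition Tgen :: "'g::group_add set \<Rightarrow> 'g \<Rightarrow> 'g oper" where
  "Tgen P s = (\<lambda>f. if f \<in> l2 P then (\<lambda>u. if -s + u \<in> P then f (-s + u) else 0) else (\<lambda>t. 0))"

inductive_set star_alg :: "'g::group_add set \<Rightarrow> 'g oper set" for P where
  gen: "s \<in> P \<Longrightarrow> Tgen P s \<in> star_alg P"
| adj: "A \<in> star_alg P \<Longrightarrow> adj P A \<in> star_alg P"
| comp: "A \<in> star_alg P \<Longrightarrow> B \<in> star_alg P \<Longrightarrow> A \<circ> B \<in> star_alg P"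
| add: "A \<in> star_alg P \<Longrightarrow> B \<in> star_alg P \<Longrightarrow> op_add A B \<in> star_alg P"
| scale: "A \<in> star_alg P \<Longrightarrow> op_scale c A \<in> star_alg P"

definition norm_closure :: "'g set \<Rightarrow> 'g oper set \<Rightarrow> 'g oper set" where
  "norm_closure P S = {A. bdd_op P A \<and> (\<forall>e>0. \<exists>B\<in>S. opnorm P (op_diff A B) < e)}"

definition Toeplitz :: "'g::group_add set \<Rightarrow> 'g oper set" where
  "Toeplitz P = norm_closure P (star_alg P)"

definition Dspan :: "'g::group_add set \<Rightarrow> 'g oper set" where
  "Dspan P = {(\<lambda>f t. \<Sum>s\<in>F. c s * (Tgen P s \<circ> adj P (Tgen P s)) f t) | F c. finite F \<and> F \<subseteq> P}"

definition Dalg :: "'g::group_add set \<Rightarrow> 'g oper set" where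
  "Dalg P = norm_closure P (Dspan P)"

definition Dcomm :: "'g::group_add set \<Rightarrow> 'g oper set" where
  "Dcomm P = {A. bdd_op P A \<and> (\<forall>D\<in>Dalg P. A \<circ> D = D \<circ> A)}"

definition is_proj :: "'g set \<Rightarrow> 'g oper \<Rightarrow> bool" where
  "is_proj P q \<longleftrightarrow> bdd_op P q \<and> q \<circ> q = q \<and> adj P q = q"

end

theory Submission
  imports Defs
begin

lemma summable_cmp:
  fixes f g :: "'a \<Rightarrow> real"
  assumes "f summable_on A" "\<And>x. x\<in>A \<Longrightarrow> 0 \<le> g x" "\<And>x. x\<in>A \<Longrightarrow> g x \<le> f x"
  shows "g summable_on A"
proof (rule nonneg_bdd_above_summable_on)
  show "\<And>x. x\<in>A \<Longrightarrow> g x \<ge> 0" by fact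
  show "bdd_above (sum g ` {F. F\<subseteq>A \<and> finite F})"
  proof (rule bdd_aboveI)
    fix y assume "y \<in> sum g ` {F. F\<subseteq>A \<and> finite F}"
    then obtain F where F: "F \<subseteq> A" "finite F" "y = sum g F" by auto
    have "sum g F \<le> sum f F" using F assms by (intro sum_mono) auto
    also have "\<dots> \<le> infsum f A"
      using F assms by (intro finite_sum_le_infsum) (auto intro: order_trans)
    finally show "y \<le> infsum f A" using F by simp
  qed
qed

lemma summable_cmp_le:
  fixes f g :: "'a \<Rightarrow> real"
  assumes "f summable_on A" "\<And>x. x\<in>A \<Longrightarrow> 0 \<le> g x" "\<And>x. x\<in>A \<Longrightarrow> g x \<le> f x"
  shows "g summable_on A \<and> infsum g A \<le> infsum f A"
  using summable_cmp[OF assms] assms by (auto intro: infsum_mono)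

lemma l2_zero[simp]: "(\<lambda>t. 0) \<in> l2 P"
  by (simp add: l2_def)

lemma l2_vanish: "f \<in> l2 P \<Longrightarrow> t \<notin> P \<Longrightarrow> f t = 0"
  by (simp add: l2_def)

lemma l2_sum: "f \<in> l2 P \<Longrightarrow> (\<lambda>t. (cmod (f t))^2) summable_on P"
  by (simp add: l2_def)

lemma sq2: "((p::real)+q)^2 \<le> 2*p^2+2*q^2"
proof -
  have "0 \<le> (p-q)^2" by simp
  thus ?thesis by (simp add: power2_diff power2_sum)
qed

lemma sq_comb_le: "(cmod (a*x + b*y))^2 \<le> 2*(cmod a)^2*(cmod x)^2 + 2*(cmod b)^2*(cmod y)^2"
proof -
  have "cmod (a*x + b*y) \<le> cmod a * cmod x + cmod b * cmod y"
    by (metis norm_mult norm_triangle_ineq)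
  hence "(cmod (a*x + b*y))^2 \<le> (cmod a * cmod x + cmod b * cmod y)^2"
    by (simp add: power_mono)
  also have "\<dots> \<le> 2*(cmod a * cmod x)^2 + 2*(cmod b * cmod y)^2"
    using sq2[of "cmod a * cmod x" "cmod b * cmod y"] .
  also have "\<dots> = 2*(cmod a)^2*(cmod x)^2 + 2*(cmod b)^2*(cmod y)^2"
    by (simp add: power_mult_distrib)
  finally show ?thesis .
qed

lemma l2_comb:
  assumes "f \<in> l2 P" "g \<in> l2 P"
  shows "(\<lambda>t. a * f t + b * g t) \<in> l2 P \<and>
    infsum (\<lambda>t. (cmod (a * f t + b * g t))^2) P \<le>
      2*(cmod a)^2 * infsum (\<lambda>t. (cmod (f t))^2) P + 2*(cmod b)^2 * infsum (\<lambda>t. (cmod (g t))^2) P"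
proof -
  let ?h = "\<lambda>t. 2*(cmod a)^2*(cmod (f t))^2 + 2*(cmod b)^2*(cmod (g t))^2"
  have s: "?h summable_on P"
    using assms by (intro summable_on_add summable_on_cmult_right l2_sum)
  have inf: "infsum ?h P = 2*(cmod a)^2 * infsum (\<lambda>t. (cmod (f t))^2) P + 2*(cmod b)^2 * infsum (\<lambda>t. (cmod (g t))^2) P"
    using assms by (simp add: infsum_add summable_on_cmult_right l2_sum infsum_cmult_right mult.assoc)
  have "(\<lambda>t. (cmod (a * f t + b * g t))^2) summable_on P \<and> infsum (\<lambda>t. (cmod (a * f t + b * g t))^2) P \<le> infsum ?h P"
    by (rule summable_cmp_le[OF s]) (auto simp: sq_comb_le)
  thus ?thesis using assms inf by (auto simp: l2_def)
qed


definition addcl :: "'g::group_add set \<Rightarrow> bool" where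
  "addcl P \<longleftrightarrow> (\<forall>x\<in>P. \<forall>y\<in>P. x + y \<in> P)"

lemma shift_l2:
  fixes P :: "'g::group_add set"
  assumes cl: "addcl P" and a: "a \<in> P" and b: "b \<in> P" and f: "f \<in> l2 P"
  shows "(\<lambda>u. if -a+u \<in> P then f (b + (-a + u)) else 0) \<in> l2 P \<and>
     infsum (\<lambda>u. (cmod (if -a+u \<in> P then f (b + (-a + u)) else 0))^2) P \<le> infsum (\<lambda>t. (cmod (f t))^2) P"
proof -
  define A where "A = {u. -a+u \<in> P}"
  define \<phi> where "\<phi> = (\<lambda>u. b + (-a + u))"
  define g where "g = (\<lambda>t. (cmod (f t))^2)"
  have AP: "A \<subseteq> P"
  proof
    fix u assume "u \<in> A"
    hence "a + (-a+u) \<in> P" using cl a unfolding A_def addcl_def by blast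
    thus "u \<in> P" by (metis add_minus_cancel)
  qed
  have inj: "inj_on \<phi> A" by (auto simp: inj_on_def \<phi>_def)
  have phiA: "\<phi> ` A \<subseteq> P"
  proof
    fix v assume "v \<in> \<phi> ` A"
    then obtain u where u: "u \<in> A" "v = \<phi> u" by blast
    have "v = b + (-a+u)" using u by (simp add: \<phi>_def add.assoc)
    thus "v \<in> P" using cl b u(1) unfolding A_def addcl_def by simp
  qed
  have gs: "g summable_on P" using f by (simp add: g_def l2_sum)
  have g1: "g summable_on (\<phi> ` A)" using summable_on_subset_banach[OF gs phiA] .
  hence g2: "(g \<circ> \<phi>) summable_on A" using summable_on_reindex[OF inj, of g] by blast
  have eq: "\<And>S. (\<lambda>u. (cmod (if -a+u \<in> P then f (b + (-a + u)) else 0))^2) summable_on P \<longleftrightarrow> (g \<circ> \<phi>) summable_on A"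
    by (rule summable_on_cong_neutral) (use AP in \<open>auto simp: A_def g_def \<phi>_def\<close>)
  have ieq: "infsum (\<lambda>u. (cmod (if -a+u \<in> P then f (b + (-a + u)) else 0))^2) P = infsum (g \<circ> \<phi>) A"
    by (rule infsum_cong_neutral) (use AP in \<open>auto simp: A_def g_def \<phi>_def\<close>)
  also have "\<dots> = infsum g (\<phi> ` A)" using infsum_reindex[OF inj, of g] by simp
  also have "\<dots> \<le> infsum g P"
    by (rule infsum_mono2[OF g1 gs phiA]) (simp add: g_def)
  finally have le: "infsum (\<lambda>u. (cmod (if -a+u \<in> P then f (b + (-a + u)) else 0))^2) P \<le> infsum g P" .
  have van: "\<forall>t. t \<notin> P \<longrightarrow> (if -a+t \<in> P then f (b + (-a + t)) else 0) = 0"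
    using AP by (auto simp: A_def)
  show ?thesis using eq g2 le van by (simp add: l2_def g_def)
qed


definition Wt :: "'g::group_add set \<Rightarrow> complex \<times> 'g \<times> 'g \<Rightarrow> 'g vec \<Rightarrow> 'g \<Rightarrow> complex" where
  "Wt P x f u = (case x of (c,a,b) \<Rightarrow> c * (if -a+u \<in> P then f (b + (-a + u)) else 0))"

definition Op :: "'g::group_add set \<Rightarrow> (complex \<times> 'g \<times> 'g) list \<Rightarrow> 'g oper" where
  "Op P L f = (if f \<in> l2 P then (\<lambda>u. \<Sum>x\<leftarrow>L. Wt P x f u) else (\<lambda>t. 0))"

definition validL :: "'g set \<Rightarrow> (complex \<times> 'g \<times> 'g) list \<Rightarrow> bool" where
  "validL P L \<longleftrightarrow> (\<forall>(c,a,b)\<in>set L. a \<in> P \<and> b \<in> P)"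

fun Kb :: "(complex \<times> 'g \<times> 'g) list \<Rightarrow> real" where
  "Kb [] = 0"
| "Kb ((c,a,b)#L) = 2*(cmod c)^2 + 2*Kb L"

lemma Kb_nonneg: "Kb L \<ge> 0"
  by (induction L rule: Kb.induct) auto

lemma I_nonneg: "infsum (\<lambda>t. (cmod (f t))^2) P \<ge> 0"
  by (rule infsum_nonneg) simp

lemma Op_l2_aux:
  assumes cl: "addcl P" and v: "validL P L" and f: "f \<in> l2 P"
  shows "(\<lambda>u. \<Sum>x\<leftarrow>L. Wt P x f u) \<in> l2 P \<and>
    infsum (\<lambda>t. (cmod ((\<Sum>x\<leftarrow>L. Wt P x f t)))^2) P \<le> Kb L * infsum (\<lambda>t. (cmod (f t))^2) P"
  using v
proof (induction L)
  case Nil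
  then show ?case by simp
next
  case (Cons x L)
  obtain c a b where x: "x = (c,a,b)" by (cases x)
  have ab: "a \<in> P" "b \<in> P" using Cons.prems x by (auto simp: validL_def)
  have vL: "validL P L" using Cons.prems by (auto simp: validL_def)
  define h where "h = (\<lambda>u. if -a+u \<in> P then f (b + (-a + u)) else 0)"
  define g where "g = (\<lambda>u. \<Sum>x\<leftarrow>L. Wt P x f u)"
  have h: "h \<in> l2 P" "infsum (\<lambda>t. (cmod (h t))^2) P \<le> infsum (\<lambda>t. (cmod (f t))^2) P"
    using shift_l2[OF cl ab f] unfolding h_def by auto
  have g: "g \<in> l2 P" "infsum (\<lambda>t. (cmod (g t))^2) P \<le> Kb L * infsum (\<lambda>t. (cmod (f t))^2) P"
    using Cons.IH[OF vL] unfolding g_def by auto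
  have eq: "(\<lambda>u. \<Sum>x\<leftarrow>x#L. Wt P x f u) = (\<lambda>t. c * h t + 1 * g t)"
    by (auto simp: x Wt_def h_def g_def)
  have comb: "(\<lambda>t. c * h t + 1 * g t) \<in> l2 P \<and>
    infsum (\<lambda>t. (cmod (c * h t + 1 * g t))^2) P \<le>
      2*(cmod c)^2 * infsum (\<lambda>t. (cmod (h t))^2) P + 2*(cmod 1)^2 * infsum (\<lambda>t. (cmod (g t))^2) P"
    by (rule l2_comb[OF h(1) g(1)])
  have le1: "2*(cmod c)^2 * infsum (\<lambda>t. (cmod (h t))^2) P + 2*(cmod 1)^2 * infsum (\<lambda>t. (cmod (g t))^2) P
      \<le> 2*(cmod c)^2 * infsum (\<lambda>t. (cmod (f t))^2) P + 2 * (Kb L * infsum (\<lambda>t. (cmod (f t))^2) P)"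
    using h(2) g(2) by (intro add_mono mult_left_mono) auto
  also have "\<dots> = Kb (x#L) * infsum (\<lambda>t. (cmod (f t))^2) P"
    by (simp add: x algebra_simps)
  finally have le2: "2*(cmod c)^2 * infsum (\<lambda>t. (cmod (h t))^2) P + 2*(cmod 1)^2 * infsum (\<lambda>t. (cmod (g t))^2) P
      \<le> Kb (x#L) * infsum (\<lambda>t. (cmod (f t))^2) P" .
  from comb have c1: "(\<lambda>t. c * h t + 1 * g t) \<in> l2 P" and c2: "infsum (\<lambda>t. (cmod (c * h t + 1 * g t))^2) P \<le>
      2*(cmod c)^2 * infsum (\<lambda>t. (cmod (h t))^2) P + 2*(cmod 1)^2 * infsum (\<lambda>t. (cmod (g t))^2) P" by auto
  have eqp: "\<And>t. (\<Sum>x\<leftarrow>x#L. Wt P x f t) = c * h t + 1 * g t" using eq by metis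
  show ?case using c1 order_trans[OF c2 le2] by (simp only: eqp eq)
qed

lemma Op_l2:
  assumes cl: "addcl P" and v: "validL P L"
  shows "Op P L f \<in> l2 P"
  using Op_l2_aux[OF cl v] by (auto simp: Op_def)

lemma Op_bound:
  assumes cl: "addcl P" and v: "validL P L"
  shows "infsum (\<lambda>t. (cmod (Op P L f t))^2) P \<le> Kb L * infsum (\<lambda>t. (cmod (f t))^2) P"
proof (cases "f \<in> l2 P")
  case True
  then show ?thesis using Op_l2_aux[OF cl v, of f] by (simp add: Op_def)
next
  case False
  have "0 \<le> Kb L * infsum (\<lambda>t. (cmod (f t))^2) P" using Kb_nonneg I_nonneg by (rule mult_nonneg_nonneg)
  then show ?thesis using False by (simp add: Op_def)
qed

lemma Wt_lin: "Wt P x (\<lambda>t. a * f t + b * g t) u = a * Wt P x f u + b * Wt P x g u"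
  by (cases x) (auto simp: Wt_def algebra_simps)

lemma sumlist_lin: "(\<Sum>x\<leftarrow>L. Wt P x (\<lambda>t. a * f t + b * g t) u) = a * (\<Sum>x\<leftarrow>L. Wt P x f u) + b * (\<Sum>x\<leftarrow>L. Wt P x g u)"
  by (induction L) (auto simp: Wt_lin algebra_simps)

lemma Op_lin:
  assumes "f \<in> l2 P" "g \<in> l2 P"
  shows "Op P L (\<lambda>t. a * f t + b * g t) = (\<lambda>t. a * Op P L f t + b * Op P L g t)"
proof -
  have "(\<lambda>t. a * f t + b * g t) \<in> l2 P" using l2_comb[OF assms] by auto
  thus ?thesis using assms by (auto simp: Op_def sumlist_lin)
qed

lemma bdd_Op:
  assumes cl: "addcl P" and v: "validL P L"
  shows "bdd_op P (Op P L)"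
  unfolding bdd_op_def
proof (intro conjI)
  show "\<forall>f. f \<notin> l2 P \<longrightarrow> Op P L f = (\<lambda>t. 0)" by (simp add: Op_def)
  show "\<forall>f\<in>l2 P. Op P L f \<in> l2 P" using Op_l2[OF cl v] by blast
  show "\<forall>f\<in>l2 P. \<forall>g\<in>l2 P. \<forall>a b. Op P L (\<lambda>t. a * f t + b * g t) = (\<lambda>t. a * Op P L f t + b * Op P L g t)"
    using Op_lin by blast
  show "\<exists>C. \<forall>f\<in>l2 P. l2norm P (Op P L f) \<le> C * l2norm P f"
  proof (intro exI ballI)
    fix f assume "f \<in> l2 P"
    have "l2norm P (Op P L f) \<le> sqrt (Kb L * infsum (\<lambda>t. (cmod (f t))^2) P)"
      unfolding l2norm_def using Op_bound[OF cl v, of f] by simp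
    also have "\<dots> = sqrt (Kb L) * l2norm P f" by (simp add: l2norm_def real_sqrt_mult)
    finally show "l2norm P (Op P L f) \<le> sqrt (Kb L) * l2norm P f" .
  qed
qed


definition lubp :: "'g::group_add set \<Rightarrow> bool" where
  "lubp P \<longleftrightarrow> (\<forall>x\<in>P. \<forall>y\<in>P. (\<exists>z\<in>P. -x + z \<in> P \<and> -y + z \<in> P) \<longrightarrow>
        (\<exists>z\<in>P. -x + z \<in> P \<and> -y + z \<in> P \<and>
           (\<forall>w\<in>P. -x + w \<in> P \<and> -y + w \<in> P \<longrightarrow> -z + w \<in> P)))"

definition bnd :: "'g::group_add set \<Rightarrow> 'g \<Rightarrow> 'g \<Rightarrow> bool" where
  "bnd P b c \<longleftrightarrow> (\<exists>z\<in>P. -b + z \<in> P \<and> -c + z \<in> P)"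

definition jn :: "'g::group_add set \<Rightarrow> 'g \<Rightarrow> 'g \<Rightarrow> 'g" where
  "jn P b c = (SOME m. m \<in> P \<and> -b + m \<in> P \<and> -c + m \<in> P \<and> (\<forall>w\<in>P. -b + w \<in> P \<and> -c + w \<in> P \<longrightarrow> -m + w \<in> P))"

lemma jn_prop:
  assumes "lubp P" "b \<in> P" "c \<in> P" "bnd P b c"
  shows "jn P b c \<in> P \<and> -b + jn P b c \<in> P \<and> -c + jn P b c \<in> P \<and>
     (\<forall>w\<in>P. -b + w \<in> P \<and> -c + w \<in> P \<longrightarrow> -jn P b c + w \<in> P)"
proof -
  have "\<exists>m. m \<in> P \<and> -b + m \<in> P \<and> -c + m \<in> P \<and> (\<forall>w\<in>P. -b + w \<in> P \<and> -c + w \<in> P \<longrightarrow> -m + w \<in> P)"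
    using assms unfolding lubp_def bnd_def by blast
  thus ?thesis unfolding jn_def by (rule someI_ex)
qed

definition pc :: "'g::group_add set \<Rightarrow> complex \<times> 'g \<times> 'g \<Rightarrow> complex \<times> 'g \<times> 'g \<Rightarrow> (complex \<times> 'g \<times> 'g) list" where
  "pc P x y = (case x of (c,a,b) \<Rightarrow> case y of (d,a',b') \<Rightarrow>
     if bnd P b a' then [(c*d, a + (-b + jn P b a'), b' + (-a' + jn P b a'))] else [])"

definition compL :: "'g::group_add set \<Rightarrow> (complex \<times> 'g \<times> 'g) list \<Rightarrow> (complex \<times> 'g \<times> 'g) list \<Rightarrow> (complex \<times> 'g \<times> 'g) list" where
  "compL P L1 L2 = concat (map (\<lambda>x. concat (map (\<lambda>y. pc P x y) L2)) L1)"

lemma Wt_comp: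
  assumes cl: "addcl P" and lp: "lubp P"
    and x: "x = (c,a,b)" and y: "y = (d,a',b')" and P: "a \<in> P" "b \<in> P" "a' \<in> P" "b' \<in> P"
  shows "Wt P x (Wt P y f) u = (\<Sum>z\<leftarrow>pc P x y. Wt P z f u)"
proof (cases "bnd P b a'")
  case True
  define m where "m = jn P b a'"
  have m: "m \<in> P" "-b + m \<in> P" "-a' + m \<in> P" "\<And>w. w \<in> P \<Longrightarrow> -b + w \<in> P \<Longrightarrow> -a' + w \<in> P \<Longrightarrow> -m + w \<in> P"
    using jn_prop[OF lp P(2) P(3) True] unfolding m_def by auto
  define v where "v = -a + u"
  have u: "u = a + v" by (simp add: v_def)
  have cond: "(v \<in> P \<and> -a' + (b + v) \<in> P) \<longleftrightarrow> -m + (b + v) \<in> P"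
  proof
    assume h: "v \<in> P \<and> -a' + (b + v) \<in> P"
    have "b + v \<in> P" using cl P h unfolding addcl_def by blast
    moreover have "-b + (b + v) \<in> P" using h by (simp add: add.assoc[symmetric])
    ultimately show "-m + (b + v) \<in> P" using m(4) h by blast
  next
    assume h: "-m + (b + v) \<in> P"
    have "(-b + m) + (-m + (b + v)) \<in> P" using cl m h unfolding addcl_def by blast
    hence v1: "v \<in> P" by (simp add: add.assoc)
    have "(-a' + m) + (-m + (b + v)) \<in> P" using cl m h unfolding addcl_def by blast
    hence "-a' + (b + v) \<in> P" by (simp add: add.assoc)
    with v1 show "v \<in> P \<and> -a' + (b + v) \<in> P" by blast
  qed
  have e1: "-(a + (-b + m)) + u = -m + (b + v)" by (simp add: u minus_add add.assoc del: add_uminus_conv_diff)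
  have e2: "b' + (-a' + m) + (-m + (b + v)) = b' + (-a' + (b + v))" by (simp add: add.assoc)
  show ?thesis
    using cond unfolding x y pc_def Wt_def
    by (simp add: True m_def[symmetric] e1 e2 v_def[symmetric]) blast
next
  case False
  have "\<not> (-a + u \<in> P \<and> -a' + (b + (-a + u)) \<in> P)"
  proof
    assume h: "-a + u \<in> P \<and> -a' + (b + (-a + u)) \<in> P"
    have "b + (-a + u) \<in> P" using cl P h unfolding addcl_def by blast
    moreover have "-b + (b + (-a + u)) \<in> P" using h by (simp only: minus_add_cancel)
    ultimately show False using False h unfolding bnd_def by blast
  qed
  thus ?thesis unfolding x y pc_def Wt_def by (auto simp: False)
qed


lemma sum_list_zero: "(\<And>x. x \<in> set L \<Longrightarrow> f x = 0) \<Longrightarrow> (\<Sum>x\<leftarrow>L. f x) = (0::complex)"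
  by (induction L) auto

lemma Wt_zero: "Wt P x (\<lambda>w. 0) u = 0"
  by (cases x) (auto simp: Wt_def)

lemma Wt_add: "Wt P x (\<lambda>w. A w + B w) u = Wt P x A u + Wt P x B u"
  by (cases x) (auto simp: Wt_def algebra_simps)

lemma Wt_sumlist: "Wt P x (\<lambda>w. \<Sum>y\<leftarrow>L. F y w) u = (\<Sum>y\<leftarrow>L. Wt P x (F y) u)"
proof (induction L)
  case Nil
  then show ?case by (simp add: Wt_zero)
next
  case (Cons a L)
  have "Wt P x (\<lambda>w. \<Sum>y\<leftarrow>a#L. F y w) u = Wt P x (\<lambda>w. F a w + (\<Sum>y\<leftarrow>L. F y w)) u" by simp
  also have "\<dots> = Wt P x (F a) u + Wt P x (\<lambda>w. \<Sum>y\<leftarrow>L. F y w) u" by (rule Wt_add)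
  finally show ?case using Cons by simp
qed

lemma Op_zero: "Op P L (\<lambda>t. 0) = (\<lambda>t. 0)"
  by (auto simp: Op_def Wt_zero intro!: ext sum_list_zero)

lemma valid_pc:
  assumes cl: "addcl P" and lp: "lubp P" and x: "x = (c,a,b)" and y: "y = (d,a',b')"
    and P: "a \<in> P" "b \<in> P" "a' \<in> P" "b' \<in> P" and z: "z \<in> set (pc P x y)"
  shows "fst (snd z) \<in> P \<and> snd (snd z) \<in> P"
proof -
  have bd: "bnd P b a'" and zz: "z = (c*d, a + (-b + jn P b a'), b' + (-a' + jn P b a'))"
    using z unfolding x y pc_def by (auto split: if_splits)
  have m: "-b + jn P b a' \<in> P" "-a' + jn P b a' \<in> P" using jn_prop[OF lp P(2) P(3) bd] by auto
  show ?thesis using cl m P unfolding zz addcl_def by auto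
qed

lemma valid_compL:
  assumes cl: "addcl P" and lp: "lubp P" and v1: "validL P L1" and v2: "validL P L2"
  shows "validL P (compL P L1 L2)"
  unfolding validL_def compL_def
proof (clarsimp)
  fix c a b x y
  assume x: "x \<in> set L1" and y: "y \<in> set L2" and z: "(c, a, b) \<in> set (pc P x y)"
  obtain c1 a1 b1 where x1: "x = (c1,a1,b1)" by (cases x)
  obtain c2 a2 b2 where y1: "y = (c2,a2,b2)" by (cases y)
  have "a1 \<in> P" "b1 \<in> P" "a2 \<in> P" "b2 \<in> P" using x y v1 v2 x1 y1 unfolding validL_def by auto
  from valid_pc[OF cl lp x1 y1 this z] show "a \<in> P \<and> b \<in> P" by simp
qed

lemma sum_list_concat': "sum_list (concat xss) = sum_list (map sum_list xss)"
  for xss :: "complex list list"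
  by (induction xss) auto

lemma Op_comp:
  assumes cl: "addcl P" and lp: "lubp P" and v1: "validL P L1" and v2: "validL P L2"
  shows "Op P L1 \<circ> Op P L2 = Op P (compL P L1 L2)"
proof
  fix f
  show "(Op P L1 \<circ> Op P L2) f = Op P (compL P L1 L2) f"
  proof (cases "f \<in> l2 P")
    case False
    have "Op P L2 f = (\<lambda>t. 0)" "Op P (compL P L1 L2) f = (\<lambda>t. 0)" using False by (simp_all add: Op_def)
    then show ?thesis by (simp add: Op_zero)
  next
    case True
    have g: "Op P L2 f \<in> l2 P" using Op_l2[OF cl v2] .
    have "(Op P L1 \<circ> Op P L2) f = (\<lambda>u. \<Sum>x\<leftarrow>L1. Wt P x (\<lambda>w. \<Sum>y\<leftarrow>L2. Wt P y f w) u)"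
      using True g by (simp add: Op_def)
    also have "\<dots> = (\<lambda>u. \<Sum>x\<leftarrow>L1. \<Sum>y\<leftarrow>L2. Wt P x (Wt P y f) u)"
      by (simp add: Wt_sumlist)
    also have "\<dots> = (\<lambda>u. \<Sum>x\<leftarrow>L1. \<Sum>y\<leftarrow>L2. \<Sum>z\<leftarrow>pc P x y. Wt P z f u)"
    proof (intro ext arg_cong[where f=sum_list] map_cong refl)
      fix u x y assume x: "x \<in> set L1" and y: "y \<in> set L2"
      obtain c1 a1 b1 where x1: "x = (c1,a1,b1)" by (cases x)
      obtain c2 a2 b2 where y1: "y = (c2,a2,b2)" by (cases y)
      have "a1 \<in> P" "b1 \<in> P" "a2 \<in> P" "b2 \<in> P" using x y v1 v2 x1 y1 unfolding validL_def by auto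
      from Wt_comp[OF cl lp x1 y1 this] show "Wt P x (Wt P y f) u = (\<Sum>z\<leftarrow>pc P x y. Wt P z f u)" .
    qed
    also have "\<dots> = Op P (compL P L1 L2) f"
      using True by (simp add: Op_def compL_def sum_list_concat' map_concat comp_def)
    finally show ?thesis .
  qed
qed


lemma eps_l2: "s \<in> P \<Longrightarrow> eps s \<in> l2 P"
proof -
  assume s: "s \<in> P"
  have "(\<lambda>t. (cmod (eps s t))^2) summable_on P \<longleftrightarrow> (\<lambda>t. (cmod (eps s t))^2) summable_on {s}"
    by (rule summable_on_cong_neutral) (use s in \<open>auto simp: eps_def\<close>)
  moreover have "(\<lambda>t. (cmod (eps s t))^2) summable_on {s}" by simp
  ultimately show ?thesis using s by (auto simp: l2_def eps_def)
qed

lemma hs_point: "((\<lambda>t. if t = t0 then v else 0) has_sum (if t0 \<in> P then v else (0::'b::{comm_monoid_add,topological_space}))) P"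
proof (cases "t0 \<in> P")
  case True
  have "((\<lambda>t. if t = t0 then v else 0) has_sum v) P \<longleftrightarrow> ((\<lambda>t. if t = t0 then v else 0) has_sum v) {t0}"
    by (rule has_sum_cong_neutral) (use True in auto)
  moreover have "((\<lambda>t. if t = t0 then v else 0) has_sum v) {t0}"
    using has_sum_finite[of "{t0}" "\<lambda>t. if t = t0 then v else 0"] by simp
  ultimately show ?thesis using True by simp
next
  case False
  have "((\<lambda>t. if t = t0 then v else 0) has_sum 0) P \<longleftrightarrow> ((\<lambda>t. if t = t0 then v else 0) has_sum 0) {}"
    by (rule has_sum_cong_neutral) (use False in auto)
  then show ?thesis using False by simp
qed

lemma grp_eq: "(b + (-a + t) = s) \<longleftrightarrow> (t = a + (-b + s))" for a b s t :: "'g::group_add"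
  by (metis add_minus_cancel minus_add_cancel)

definition adjx :: "complex \<times> 'g \<times> 'g \<Rightarrow> complex \<times> 'g \<times> 'g" where
  "adjx x = (case x of (c,a,b) \<Rightarrow> (cnj c, b, a))"

lemma hs_single:
  assumes g: "g \<in> l2 P" and cl: "addcl P" and a: "a \<in> P"
  shows "((\<lambda>t. g t * cnj (Wt P (c,a,b) (eps s) t)) has_sum (Wt P (adjx (c,a,b)) g s)) P"
proof -
  define t0 where "t0 = a + (-b + s)"
  have fe: "(\<lambda>t. g t * cnj (Wt P (c,a,b) (eps s) t)) = (\<lambda>t. if t = t0 then (if -b+s \<in> P then g t0 * cnj c else 0) else 0)"
  proof
    fix t
    show "g t * cnj (Wt P (c,a,b) (eps s) t) = (if t = t0 then (if -b+s \<in> P then g t0 * cnj c else 0) else 0)"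
    proof (cases "t = t0")
      case True
      have "-a + t = -b + s" unfolding True t0_def by simp
      then show ?thesis using True by (simp add: Wt_def eps_def)
    next
      case False
      have "b + (-a + t) \<noteq> s" using False grp_eq unfolding t0_def by blast
      then show ?thesis using False by (simp add: Wt_def eps_def)
    qed
  qed
  have val: "(if t0 \<in> P then (if -b+s \<in> P then g t0 * cnj c else 0) else 0) = Wt P (adjx (c,a,b)) g s"
  proof (cases "-b + s \<in> P")
    case True
    hence "t0 \<in> P" using cl a unfolding addcl_def t0_def by blast
    then show ?thesis using True by (simp add: Wt_def adjx_def t0_def mult.commute)
  next
    case False
    then show ?thesis by (simp add: Wt_def adjx_def)
  qed
  show ?thesis unfolding fe val[symmetric] by (rule hs_point)
qed

lemma hs_list:
  assumes g: "g \<in> l2 P" and cl: "addcl P" and v: "validL P L"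
  shows "((\<lambda>t. g t * cnj (\<Sum>x\<leftarrow>L. Wt P x (eps s) t)) has_sum (\<Sum>x\<leftarrow>L. Wt P (adjx x) g s)) P"
  using v
proof (induction L)
  case Nil
  then show ?case by simp
next
  case (Cons x L)
  obtain c a b where x: "x = (c,a,b)" by (cases x)
  have a: "a \<in> P" using Cons.prems x by (auto simp: validL_def)
  have vL: "validL P L" using Cons.prems by (auto simp: validL_def)
  have "((\<lambda>t. g t * cnj (Wt P x (eps s) t) + g t * cnj (\<Sum>x\<leftarrow>L. Wt P x (eps s) t)) has_sum
      (Wt P (adjx x) g s + (\<Sum>x\<leftarrow>L. Wt P (adjx x) g s))) P"
    using has_sum_add[OF hs_single[OF g cl a, of c b s] Cons.IH[OF vL]] unfolding x .
  then show ?case by (simp add: distrib_left)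
qed

lemma valid_adj: "validL P L \<Longrightarrow> validL P (map adjx L)"
  by (auto simp: validL_def adjx_def)

lemma adj_Op:
  assumes cl: "addcl P" and v: "validL P L"
  shows "adj P (Op P L) = Op P (map adjx L)"
proof
  fix g
  show "adj P (Op P L) g = Op P (map adjx L) g"
  proof (cases "g \<in> l2 P")
    case False
    then show ?thesis by (simp add: adj_def Op_def)
  next
    case True
    show ?thesis
    proof
      fix s
      show "adj P (Op P L) g s = Op P (map adjx L) g s"
      proof (cases "s \<in> P")
        case sP: True
        have "adj P (Op P L) g s = infsum (\<lambda>t. g t * cnj (\<Sum>x\<leftarrow>L. Wt P x (eps s) t)) P"
          using True sP eps_l2[OF sP] by (simp add: adj_def Op_def)
        also have "\<dots> = (\<Sum>x\<leftarrow>L. Wt P (adjx x) g s)"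
          by (rule infsumI[OF hs_list[OF True cl v]])
        also have "\<dots> = Op P (map adjx L) g s" using True by (simp add: Op_def comp_def)
        finally show ?thesis .
      next
        case sP: False
        have "(\<Sum>x\<leftarrow>L. Wt P (adjx x) g s) = 0"
        proof (rule sum_list_zero)
          fix x assume "x \<in> set L"
          then obtain c a b where x: "x = (c,a,b)" "b \<in> P" using v unfolding validL_def by (cases x) auto
          have "-b + s \<notin> P"
          proof
            assume "-b + s \<in> P"
            hence "b + (-b + s) \<in> P" using cl x(2) unfolding addcl_def by blast
            thus False using sP by simp
          qed
          then show "Wt P (adjx x) g s = 0" by (simp add: x Wt_def adjx_def)
        qed
        then show ?thesis using True sP by (simp add: adj_def Op_def comp_def)
      qed
    qed
  qed
qed

lemma Tgen_Op: "Tgen P s = Op P [(1,s,0)]"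
  by (auto simp: Tgen_def Op_def Wt_def intro!: ext)

lemma add_Op: "op_add (Op P L1) (Op P L2) = Op P (L1 @ L2)"
  by (auto simp: op_add_def Op_def intro!: ext)

definition scx :: "complex \<Rightarrow> complex \<times> 'g \<times> 'g \<Rightarrow> complex \<times> 'g \<times> 'g" where
  "scx c x = (case x of (d,a,b) \<Rightarrow> (c*d,a,b))"

lemma scale_sum: "c * (\<Sum>x\<leftarrow>L. Wt P x f u) = (\<Sum>x\<leftarrow>map (scx c) L. Wt P x f u)"
  by (induction L) (auto simp: Wt_def scx_def algebra_simps split: prod.split)

lemma scale_Op: "op_scale c (Op P L) = Op P (map (scx c) L)"
  by (auto simp: op_scale_def Op_def scale_sum intro!: ext)

lemma star_rep:
  assumes cl: "addcl P" and lp: "lubp P" and z: "0 \<in> P" and B: "B \<in> star_alg P"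
  shows "\<exists>L. validL P L \<and> B = Op P L"
  using B
proof (induction rule: star_alg.induct)
  case (gen s)
  then show ?case using z by (intro exI[of _ "[(1,s,0)]"]) (auto simp: validL_def Tgen_Op)
next
  case (adj A)
  then obtain L where "validL P L" "A = Op P L" by blast
  then show ?case using adj_Op[OF cl] valid_adj by metis
next
  case (comp A B)
  then obtain L1 L2 where "validL P L1" "A = Op P L1" "validL P L2" "B = Op P L2" by blast
  then show ?case using Op_comp[OF cl lp] valid_compL[OF cl lp] by metis
next
  case (add A B)
  then obtain L1 L2 where "validL P L1" "A = Op P L1" "validL P L2" "B = Op P L2" by blast
  then show ?case using add_Op[of P L1 L2] by (intro exI[of _ "L1 @ L2"]) (auto simp: validL_def)
next
  case (scale A c)
  then obtain L where "validL P L" "A = Op P L" by blast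
  then show ?case using scale_Op[of c P L] by (intro exI[of _ "map (scx c) L"]) (auto simp: validL_def scx_def)
qed


lemma neg0: "P \<inter> uminus ` P = {0} \<Longrightarrow> a \<in> P \<Longrightarrow> -a \<in> P \<Longrightarrow> a = 0" for a :: "'g::group_add"
proof -
  assume i: "P \<inter> uminus ` P = {0}" and a: "a \<in> P" and na: "-a \<in> P"
  have "a = - (-a)" by simp
  hence "a \<in> uminus ` P" using na by (rule image_eqI)
  thus "a = 0" using i a by blast
qed

lemma l2norm_eps: "x \<in> P \<Longrightarrow> l2norm P (eps x) = 1"
proof -
  assume x: "x \<in> P"
  have e: "(\<lambda>t. (cmod (eps x t))^2) = (\<lambda>t. if t = x then 1 else (0::real))"
    by (auto simp: eps_def)
  have "infsum (\<lambda>t. (cmod (eps x t))^2) P = 1"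
    unfolding e using infsumI[OF hs_point[of x "1::real" P]] x by simp
  thus ?thesis by (simp add: l2norm_def)
qed

lemma l2norm_nonneg: "l2norm P f \<ge> 0"
  by (simp add: l2norm_def I_nonneg)

lemma l2norm_sq: "(l2norm P f)^2 = infsum (\<lambda>t. (cmod (f t))^2) P"
  by (simp add: l2norm_def I_nonneg)

lemma point_le_norm:
  assumes "h \<in> l2 P" "x \<in> P"
  shows "cmod (h x) \<le> l2norm P h"
proof -
  have "(\<Sum>t\<in>{x}. (cmod (h t))^2) \<le> infsum (\<lambda>t. (cmod (h t))^2) P"
    by (rule finite_sum_le_infsum) (use assms in \<open>auto simp: l2_sum\<close>)
  hence "(cmod (h x))^2 \<le> infsum (\<lambda>t. (cmod (h t))^2) P" by simp
  hence "sqrt ((cmod (h x))^2) \<le> l2norm P h" unfolding l2norm_def by (rule real_sqrt_le_mono)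
  thus ?thesis by simp
qed

lemma diag_bound:
  assumes cl: "addcl P" and v: "validL P L" and Q: "bdd_op P Q" and x: "x \<in> P"
  shows "cmod (Q (eps x) x - Op P L (eps x) x) \<le> opnorm P (op_diff Q (Op P L))"
proof -
  define A where "A = op_diff Q (Op P L)"
  obtain C where C: "\<forall>f\<in>l2 P. l2norm P (Q f) \<le> C * l2norm P f" using Q unfolding bdd_op_def by blast
  have Ql2: "\<And>f. f \<in> l2 P \<Longrightarrow> Q f \<in> l2 P" using Q unfolding bdd_op_def by blast
  have Af: "\<And>f. f \<in> l2 P \<Longrightarrow> A f \<in> l2 P \<and> infsum (\<lambda>t. (cmod (A f t))^2) P \<le>
      2 * infsum (\<lambda>t. (cmod (Q f t))^2) P + 2 * infsum (\<lambda>t. (cmod (Op P L f t))^2) P"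
  proof -
    fix f assume f: "f \<in> l2 P"
    have "A f = (\<lambda>t. 1 * Q f t + (-1) * Op P L f t)" by (auto simp: A_def op_diff_def)
    thus "?thesis f" using l2_comb[OF Ql2[OF f] Op_l2[OF cl v], of 1 "-1"] by simp
  qed
  define S where "S = {l2norm P (A f) | f. f \<in> l2 P \<and> l2norm P f \<le> 1}"
  have bdd: "bdd_above S"
  proof (rule bdd_aboveI)
    fix y assume "y \<in> S"
    then obtain f where f: "f \<in> l2 P" "l2norm P f \<le> 1" "y = l2norm P (A f)" unfolding S_def by blast
    have n0: "0 \<le> l2norm P f" by (rule l2norm_nonneg)
    have "l2norm P (Q f) \<le> C * l2norm P f" using C f by blast
    also have "\<dots> \<le> \<bar>C\<bar> * l2norm P f" using n0 by (intro mult_right_mono) auto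
    also have "\<dots> \<le> \<bar>C\<bar>" using n0 f(2) by (intro mult_left_le) auto
    finally have "(l2norm P (Q f))^2 \<le> \<bar>C\<bar>^2" using l2norm_nonneg by (intro power_mono) auto
    hence q2: "infsum (\<lambda>t. (cmod (Q f t))^2) P \<le> C^2" by (simp add: l2norm_sq)
    have "infsum (\<lambda>t. (cmod (Op P L f t))^2) P \<le> Kb L * (l2norm P f)^2"
      using Op_bound[OF cl v, of f] by (simp add: l2norm_sq)
    also have "\<dots> \<le> Kb L * 1" using n0 f(2) Kb_nonneg
      by (intro mult_left_mono) (auto simp: power_le_one)
    finally have o2: "infsum (\<lambda>t. (cmod (Op P L f t))^2) P \<le> Kb L" by simp
    have "infsum (\<lambda>t. (cmod (A f t))^2) P \<le> 2 * C^2 + 2 * Kb L" using Af[OF f(1)] q2 o2 by linarith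
    hence "l2norm P (A f) \<le> sqrt (2 * C^2 + 2 * Kb L)" unfolding l2norm_def by (rule real_sqrt_le_mono)
    thus "y \<le> sqrt (2 * C^2 + 2 * Kb L)" using f(3) by (simp only:)
  qed
  have ex: "eps x \<in> l2 P" using eps_l2[OF x] .
  have le1: "l2norm P (eps x) \<le> 1" using l2norm_eps[OF x] by simp
  have mem: "l2norm P (A (eps x)) \<in> S" unfolding S_def using ex le1 by blast
  have "cmod (A (eps x) x) \<le> l2norm P (A (eps x))" using point_le_norm[OF conjunct1[OF Af[OF ex]] x] .
  also have "\<dots> \<le> Sup S" using cSup_upper[OF mem bdd] .
  also have "Sup S = opnorm P A" unfolding S_def opnorm_def by (rule refl)
  finally have "cmod (A (eps x) x) \<le> opnorm P A" .
  moreover have "A (eps x) x = Q (eps x) x - Op P L (eps x) x" by (simp add: A_def op_diff_def)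
  ultimately show ?thesis unfolding A_def by simp
qed

lemma diag_eq:
  assumes v: "validL P L" and p: "p \<in> P" and z: "0 \<in> P" and inter: "P \<inter> uminus ` P = {0}"
    and avoid: "\<And>c a b. (c,a,b) \<in> set L \<Longrightarrow> a \<noteq> 0 \<Longrightarrow> -a + p \<notin> P"
  shows "Op P L (eps 0) 0 = Op P L (eps p) p"
proof -
  have "(\<Sum>x\<leftarrow>L. Wt P x (eps 0) 0) = (\<Sum>x\<leftarrow>L. Wt P x (eps p) p)"
  proof (intro arg_cong[where f=sum_list] map_cong refl)
    fix x assume xL: "x \<in> set L"
    obtain c a b where x: "x = (c,a,b)" by (cases x)
    have a: "a \<in> P" using xL x v unfolding validL_def by auto
    show "Wt P x (eps 0) 0 = Wt P x (eps p) p"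
    proof (cases "a = 0")
      case True
      have bp: "\<And>b. b + p = p \<longleftrightarrow> b = 0" by (metis add.left_neutral add_right_cancel)
      show ?thesis using z p True by (simp add: x Wt_def eps_def bp)
    next
      case False
      have "-a \<notin> P" using neg0[OF inter a] False by blast
      moreover have "-a + p \<notin> P" using avoid[of c a b] xL x False by blast
      ultimately show ?thesis by (simp add: x Wt_def)
    qed
  qed
  thus ?thesis using eps_l2[OF z] eps_l2[OF p] by (simp add: Op_def)
qed


lemma Dt_Op:
  assumes cl: "addcl P" and lp: "lubp P" and z: "0 \<in> P" and inter: "P \<inter> uminus ` P = {0}" and t: "t \<in> P"
  shows "Tgen P t \<circ> adj P (Tgen P t) = Op P [(1,t,t)]"
proof -
  have v1: "validL P [(1,t,0)]" using t z by (simp add: validL_def)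
  have v2: "validL P (map adjx [(1,t,0)])" using valid_adj[OF v1] .
  have bd: "bnd P 0 0" using z unfolding bnd_def by auto
  have j: "jn P 0 0 = 0"
  proof -
    have "jn P 0 0 \<in> P" "-jn P 0 0 + 0 \<in> P" using jn_prop[OF lp z z bd] z by auto
    thus ?thesis using neg0[OF inter] by simp
  qed
  have "Tgen P t \<circ> adj P (Tgen P t) = Op P (compL P [(1,t,0)] (map adjx [(1,t,0)]))"
    unfolding Tgen_Op adj_Op[OF cl v1] using Op_comp[OF cl lp v1 v2] .
  also have "compL P [(1,t,0)] (map adjx [(1,t,0)]) = [(1,t,t)]"
    by (simp add: compL_def adjx_def pc_def bd j)
  finally show ?thesis .
qed

lemma l2inner_eps0:
  assumes z: "0 \<in> P"
  shows "l2inner P h (eps 0) = h 0"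
proof -
  have e: "(\<lambda>t. h t * cnj (eps 0 t)) = (\<lambda>t. if t = 0 then h 0 else 0)"
    by (auto simp: eps_def)
  show ?thesis unfolding l2inner_def e using infsumI[OF hs_point[of 0 "h 0" P]] z by simp
qed

theorem theorem6p10:
  fixes P :: "'g::group_add set" and q :: "'g \<Rightarrow> 'g oper"
  assumes "quasi_lattice_ordered P"
    and "\<forall>x. q x \<in> Toeplitz P"
    and "\<forall>x. is_proj P (q x)"
    and "\<forall>x y. x \<noteq> y \<longrightarrow> q x \<circ> q y = (\<lambda>f t. 0)"
    and "\<forall>y. q y \<in> Dcomm P"
    and "\<forall>y. \<forall>p\<in>P. Tgen P p \<circ> q y = q (p + y) \<circ> Tgen P p"
    and "\<forall>f\<in>l2 P. \<forall>g\<in>l2 P. ((\<lambda>y. l2inner P (q y f) g) has_sum l2inner P f g) UNIV"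
  shows "has_FESSPE P"
proof -
  note qlo = assms(1)
  have z: "0 \<in> P" using qlo by (simp add: quasi_lattice_ordered_def)
  have cl: "addcl P" using qlo by (simp add: quasi_lattice_ordered_def addcl_def)
  have inter: "P \<inter> uminus ` P = {0}" using qlo by (simp add: quasi_lattice_ordered_def)
  have lp: "lubp P" using qlo unfolding quasi_lattice_ordered_def lubp_def by blast
  have bq: "\<And>y. bdd_op P (q y)" using assms(3) by (simp add: is_proj_def)
  have qq: "\<And>y. q y \<circ> q y = q y" using assms(3) by (simp add: is_proj_def)
  have ql2: "\<And>y f. f \<in> l2 P \<Longrightarrow> q y f \<in> l2 P" using bq unfolding bdd_op_def by blast
  have qlin: "\<And>y f g a b. f \<in> l2 P \<Longrightarrow> g \<in> l2 P \<Longrightarrow> q y (\<lambda>t. a * f t + b * g t) = (\<lambda>t. a * q y f t + b * q y g t)"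
    using bq unfolding bdd_op_def by blast
  have q0: "\<And>y. q y (\<lambda>t. 0) = (\<lambda>t. 0)"
    using qlin[of "\<lambda>t. 0" "\<lambda>t. 0" _ 0 0] by simp
  have e0: "eps 0 \<in> l2 P" using eps_l2[OF z] .
  have step1: "\<And>y. q y (eps 0) = (\<lambda>u. q y (eps 0) 0 * eps 0 u)"
  proof
    fix y u
    show "q y (eps 0) u = q y (eps 0) 0 * eps 0 u"
    proof (cases "u = 0")
      case True
      then show ?thesis by (simp add: eps_def)
    next
      case un: False
      show ?thesis
      proof (cases "u \<in> P")
        case False
        then show ?thesis using l2_vanish[OF ql2[OF e0]] un by (simp add: eps_def)
      next
        case uP: True
        define Dt where "Dt = (\<lambda>f t'. \<Sum>s\<in>{u}. (\<lambda>_. 1::complex) s * (Tgen P s \<circ> adj P (Tgen P s)) f t')"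
        have DtO: "Dt = Op P [(1,u,u)]"
          unfolding Dt_def using Dt_Op[OF cl lp z inter uP] by (simp add: fun_eq_iff)
        have vu: "validL P [(1,u,u)]" using uP by (simp add: validL_def)
        have "Dt \<in> Dspan P" unfolding Dspan_def Dt_def
          using uP by (intro CollectI exI[of _ "{u}"] exI[of _ "\<lambda>_. 1::complex"]) simp
        moreover have "opnorm P (op_diff Dt Dt) = 0"
        proof -
          have "{l2norm P (op_diff Dt Dt f) | f. f \<in> l2 P \<and> l2norm P f \<le> 1} = {0}"
          proof -
            have "l2norm P (\<lambda>t. 0) = 0" by (simp add: l2norm_def)
            moreover have "l2norm P (\<lambda>t. 0) \<le> 1" by (simp add: l2norm_def)
            ultimately show ?thesis by (auto simp: op_diff_def intro!: exI[of _ "\<lambda>t. 0"])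
          qed
          thus ?thesis by (simp add: opnorm_def)
        qed
        ultimately have "Dt \<in> Dalg P"
          unfolding Dalg_def norm_closure_def using bdd_Op[OF cl vu] DtO by force
        hence comm: "q y \<circ> Dt = Dt \<circ> q y" using assms(5) by (simp add: Dcomm_def)
        have d1: "Dt (eps 0) = (\<lambda>t. 0)"
        proof
          fix w
          show "Dt (eps 0) w = 0"
          proof (cases "-u + w \<in> P \<and> w = 0")
            case True
            hence "-u \<in> P" by (metis add.right_neutral)
            hence "u = 0" using neg0[OF inter uP] by simp
            thus ?thesis using un by simp
          next
            case False
            then show ?thesis using e0 by (auto simp: DtO Op_def Wt_def eps_def)
          qed
        qed
        have "q y (Dt (eps 0)) = Dt (q y (eps 0))" using comm by (metis comp_apply)
        hence "Dt (q y (eps 0)) = (\<lambda>t. 0)" using d1 q0 by simp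
        hence "Dt (q y (eps 0)) u = 0" by simp
        moreover have "Dt (q y (eps 0)) u = q y (eps 0) u"
          using ql2[OF e0] z by (simp add: DtO Op_def Wt_def)
        ultimately show ?thesis using un by (simp add: eps_def)
      qed
    qed
  qed
  define \<alpha> where "\<alpha> = (\<lambda>y. q y (eps 0) 0)"
  have step2: "\<And>y. \<alpha> y = 0 \<or> \<alpha> y = 1"
  proof -
    fix y
    have "q y (q y (eps 0)) = q y (eps 0)" using qq by (metis comp_apply)
    moreover have "q y (q y (eps 0)) = (\<lambda>t. \<alpha> y * q y (eps 0) t + 0 * q y (eps 0) t)"
    proof -
      have "q y (q y (eps 0)) = q y (\<lambda>t. \<alpha> y * eps 0 t + 0 * eps 0 t)"
        using step1[of y] by (simp add: \<alpha>_def)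
      thus ?thesis using qlin[OF e0 e0, of y "\<alpha> y" 0] by simp
    qed
    ultimately have "q y (eps 0) 0 = \<alpha> y * q y (eps 0) 0" by (metis add_0_right mult_zero_left)
    hence "\<alpha> y = \<alpha> y * \<alpha> y" by (simp add: \<alpha>_def)
    thus "\<alpha> y = 0 \<or> \<alpha> y = 1"
      by (metis mult_cancel_left mult.right_neutral)
  qed
  have hs: "(\<alpha> has_sum 1) UNIV"
  proof -
    have "((\<lambda>y. l2inner P (q y (eps 0)) (eps 0)) has_sum l2inner P (eps 0) (eps 0)) UNIV"
      using assms(7) e0 by blast
    thus ?thesis unfolding l2inner_eps0[OF z] \<alpha>_def by (simp add: eps_def)
  qed
  obtain y0 where y0: "\<alpha> y0 = 1"
  proof (rule ccontr)
    assume "\<not> thesis"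
    hence "\<And>y. \<alpha> y = 0" using step2 that by blast
    hence "\<alpha> = (\<lambda>_. 0)" by auto
    hence "(\<alpha> has_sum 0) UNIV" by simp
    thus False using hs has_sum_unique by fastforce
  qed
  have qy0: "q y0 (eps 0) = eps 0" using step1[of y0] y0 by (simp add: \<alpha>_def)
  have step4: "\<And>p. p \<in> P \<Longrightarrow> p \<noteq> 0 \<Longrightarrow> q y0 (eps p) p = 0"
  proof -
    fix p assume p: "p \<in> P" "p \<noteq> 0"
    have Te: "Tgen P p (eps 0) = eps p"
    proof
      fix u
      have "(-p + u = 0) = (u = p)" by (metis add_minus_cancel add.right_neutral minus_add_cancel)
      thus "Tgen P p (eps 0) u = eps p u" using e0 z by (auto simp: Tgen_def eps_def)
    qed
    have "Tgen P p (q y0 (eps 0)) = q (p + y0) (Tgen P p (eps 0))"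
      using assms(6) p(1) by (metis comp_apply)
    hence qp: "q (p + y0) (eps p) = eps p" using qy0 Te by simp
    have ne: "y0 \<noteq> p + y0" using p(2) by (metis add.left_neutral add_right_cancel)
    have "q y0 (q (p + y0) (eps p)) = (\<lambda>t. 0)" using assms(4) ne by (metis comp_apply)
    thus "q y0 (eps p) p = 0" using qp by simp
  qed
  have "q y0 \<in> norm_closure P (star_alg P)" using assms(2) by (simp add: Toeplitz_def)
  hence "\<forall>e>0. \<exists>B\<in>star_alg P. opnorm P (op_diff (q y0) B) < e"
    unfolding norm_closure_def by blast
  hence "\<exists>B\<in>star_alg P. opnorm P (op_diff (q y0) B) < 1/2" by (rule allE[of _ "1/2"]) simp
  then obtain B where B: "B \<in> star_alg P" "opnorm P (op_diff (q y0) B) < 1/2" by blast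
  obtain L where L: "validL P L" "B = Op P L" using star_rep[OF cl lp z B(1)] by blast
  have close: "\<And>x. x \<in> P \<Longrightarrow> cmod (q y0 (eps x) x - Op P L (eps x) x) < 1/2"
  proof -
    fix x assume x: "x \<in> P"
    show "cmod (q y0 (eps x) x - Op P L (eps x) x) < 1/2"
      using le_less_trans[OF diag_bound[OF cl L(1) bq x] B(2)[unfolded L(2)]] .
  qed
  define F where "F = {a. \<exists>c b. (c,a,b) \<in> set L \<and> a \<noteq> 0}"
  have finF: "finite F"
  proof -
    have "F \<subseteq> (\<lambda>x. fst (snd x)) ` set L" unfolding F_def by force
    thus ?thesis by (rule finite_subset) simp
  qed
  have FP: "F \<subseteq> P - {0}" using L(1) unfolding F_def validL_def by auto
  have "{f + p | f p. f \<in> F \<and> p \<in> P} = P - {0}"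
  proof (intro equalityI subsetI)
    fix x assume "x \<in> {f + p | f p. f \<in> F \<and> p \<in> P}"
    then obtain f p where fp: "x = f + p" "f \<in> F" "p \<in> P" by blast
    have f: "f \<in> P" "f \<noteq> 0" using FP fp(2) by auto
    have "x \<in> P" using cl f fp unfolding addcl_def by blast
    moreover have "x \<noteq> 0"
    proof
      assume "x = 0"
      hence "f = - p" using fp(1) by (simp add: eq_neg_iff_add_eq_0)
      hence "-p \<in> P" using f by simp
      hence "p = 0" using neg0[OF inter fp(3)] by simp
      thus False using \<open>f = -p\<close> f by simp
    qed
    ultimately show "x \<in> P - {0}" by simp
  next
    fix p assume p: "p \<in> P - {0}"
    show "p \<in> {f + p | f p. f \<in> F \<and> p \<in> P}"
    proof (rule ccontr)
      assume nin: "p \<notin> {f + p | f p. f \<in> F \<and> p \<in> P}"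
      have avoid: "\<And>c a b. (c,a,b) \<in> set L \<Longrightarrow> a \<noteq> 0 \<Longrightarrow> -a + p \<notin> P"
      proof
        fix c a b assume "(c,a,b) \<in> set L" "a \<noteq> 0" "-a + p \<in> P"
        hence "a \<in> F" unfolding F_def by blast
        moreover have "p = a + (-a + p)" by simp
        ultimately show False using nin \<open>-a + p \<in> P\<close> by blast
      qed
      have de: "Op P L (eps 0) 0 = Op P L (eps p) p" using diag_eq[OF L(1) _ z inter avoid] p by simp
      have c0: "cmod (1 - Op P L (eps 0) 0) < 1/2" using close[OF z] qy0 by (simp add: eps_def)
      have cp: "cmod (0 - Op P L (eps p) p) < 1/2" using close[of p] step4[of p] p by simp
      have "cmod (1::complex) \<le> cmod (1 - Op P L (eps 0) 0) + cmod (Op P L (eps 0) 0)"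
        by (metis diff_add_cancel norm_triangle_ineq)
      also have "\<dots> < 1" using c0 cp de by simp
      finally show False by simp
    qed
  qed
  thus ?thesis unfolding has_FESSPE_def using finF FP by blast
qed

end
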